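(* Let $(a_p)_{p\in\mathbb{Z}}$ be a strictly positive rapidly decreasing sequence with $a_p=a_{-p}$ and $(a_p/a_{p+1})$ bounded, and let $H$ be the associated Hilbert completion of $L^*\mathbb{C}^n$. Transport operators on $H$ to $L^{2,*}\mathbb{C}^n$ via the isometry $T:H\to L^{2,*}\mathbb{C}^n$, $Te_p=\sqrt{a_p}\,e_p$. Then the inclusion $L_{\mathrm{pol}}U_n\to\mathrm{GL}_{\mathcal{J}}(L^{2,*}\mathbb{C}^n)$, $\sum_qz^qA_q\mapsto T\big(\sum_qz^q\otimes A_q\big)T^{-1}$, is homotopic (through maps into $\mathrm{GL}_{\mathcal{J}}(L^{2,*}\mathbb{C}^n)$) to the standard inclusion $\sum_qz^qA_q\mapsto\sum_q\zeta_0^q\otimes A_q$, which factors through $LU_n$, where $\zeta_0e_p=e_{p-1}$.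
   Context: $\mathcal{S}^*$ (the dual of rapidly decreasing complex $\mathbb{Z}$-indexed sequences) is identified with $L^*\mathbb{C}$ via Fourier coefficients, with basis $e_p$; $H$ is the completion of $\mathcal{S}^*\otimes\mathbb{C}^n$ for the inner product $\sum_pb^p\overline{c^p}a_p$ tensored with the standard inner product on $\mathbb{C}^n$. On $H$, $z$ acts by $ze_p=e_{p-1}$ and a polynomial loop $\sum_qz^qA_q$ ($A_q\in M_n(\mathbb{C})$) acts by $\sum_qz^q\otimes A_q$. $L^{2,*}\mathbb{C}^n$ is the dual of $L^2\mathbb{C}^n$, identified with $\ell^2(\mathbb{Z})\otimes\mathbb{C}^n$ with orthonormal basis $e_p$. The polarising operator $J$ is $Je_p=-(-1)^{\mathrm{sign}(p)}ie_p$ (tensored with $I_n$); $\mathcal{J}$ is its class modulo Hilbert–Schmidt operators, and $\mathrm{GL}_{\mathcal{J}}$ is the group of invertible bounded operators $A$ with $[A,J]$ Hilbert–Schmidt. *)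

theory Defs
  imports "HOL-Analysis.Analysis"
begin

text \<open>Coordinates: a vector of L^{2,*}C^n = l2(Z) (x) C^n is a function
  v :: int \<times> 'n \<Rightarrow> complex, v(p,i) being the coefficient of e_p (x) eps_i.
  Operators are functions on such coordinate vectors; only their behaviour
  on l2 matters.\<close>

type_synonym 'n vect = "int \<times> 'n \<Rightarrow> complex"
type_synonym 'n oper = "'n vect \<Rightarrow> 'n vect"

definition l2 :: "'n vect set" where
  "l2 = {v. (\<lambda>k. (cmod (v k))\<^sup>2) summable_on UNIV}"

definition l2norm :: "'n vect \<Rightarrow> real" where
  "l2norm v = sqrt (infsum (\<lambda>k. (cmod (v k))\<^sup>2) UNIV)"

definition basisv :: "int \<times> 'n \<Rightarrow> 'n vect" where
  "basisv k = (\<lambda>k'. if k' = k then 1 else 0)"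

definition bounded_op :: "'n oper \<Rightarrow> bool" where
  "bounded_op F \<longleftrightarrow>
     (\<forall>v\<in>l2. F v \<in> l2) \<and>
     (\<forall>u\<in>l2. \<forall>v\<in>l2. F (\<lambda>k. u k + v k) = (\<lambda>k. F u k + F v k)) \<and>
     (\<forall>c. \<forall>v\<in>l2. F (\<lambda>k. c * v k) = (\<lambda>k. c * F v k)) \<and>
     (\<exists>C. \<forall>v\<in>l2. l2norm (F v) \<le> C * l2norm v)"

definition opnorm :: "'n oper \<Rightarrow> real" where
  "opnorm F = Sup {l2norm (F v) | v. v \<in> l2 \<and> l2norm v \<le> 1}"

definition hilbert_schmidt :: "'n oper \<Rightarrow> bool" where
  "hilbert_schmidt F \<longleftrightarrow> (\<lambda>k. (l2norm (F (basisv k)))\<^sup>2) summable_on UNIV"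

definition hsnorm :: "'n oper \<Rightarrow> real" where
  "hsnorm F = sqrt (infsum (\<lambda>k. (l2norm (F (basisv k)))\<^sup>2) UNIV)"

text \<open>Polarising operator: J e_p = -i e_p for p \<ge> 0 and J e_p = i e_p for p < 0
  (i.e. J e_p = -(-1)^{sign p} i e_p with sign p = 0 for p \<ge> 0, 1 for p < 0).\<close>
definition Jop :: "'n oper" where
  "Jop v = (\<lambda>(p, i). (if p \<ge> 0 then - \<i> else \<i>) * v (p, i))"

definition commJ :: "'n oper \<Rightarrow> 'n oper" where
  "commJ F = (\<lambda>v k. F (Jop v) k - Jop (F v) k)"

definition GLJ :: "'n oper set" where
  "GLJ = {F. bounded_op F \<and>
             (\<exists>G. bounded_op G \<and> (\<forall>v\<in>l2. G (F v) = v \<and> F (G v) = v)) \<and>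
             hilbert_schmidt (commJ F)}"

text \<open>Metric defining the topology of GL_J: operator norm plus Hilbert-Schmidt
  norm of the commutator with J.\<close>
definition distJ :: "'n oper \<Rightarrow> 'n oper \<Rightarrow> real" where
  "distJ F G = opnorm (\<lambda>v k. F v k - G v k) + hsnorm (commJ (\<lambda>v k. F v k - G v k))"

definition mat_adj :: "complex^'n^'n \<Rightarrow> complex^'n^'n" where
  "mat_adj M = (\<chi> i j. cnj (M $ j $ i))"

definition unitary_mat :: "complex^'n^'n \<Rightarrow> bool" where
  "unitary_mat M \<longleftrightarrow> M ** mat_adj M = mat 1 \<and> mat_adj M ** M = mat 1"

definition loop_eval :: "(int \<Rightarrow> complex^'n^'n) \<Rightarrow> complex \<Rightarrow> complex^'n^'n" where
  "loop_eval A z = (\<Sum>q\<in>{q. A q \<noteq> 0}. (\<chi> i j. z powi q * A q $ i $ j))"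

definition LpolU :: "(int \<Rightarrow> complex^'n^'n) set" where
  "LpolU = {A. finite {q. A q \<noteq> 0} \<and> (\<forall>z. cmod z = 1 \<longrightarrow> unitary_mat (loop_eval A z))}"

definition LpolU_deg :: "nat \<Rightarrow> (int \<Rightarrow> complex^'n^'n) set" where
  "LpolU_deg N = {A \<in> LpolU. \<forall>q. A q \<noteq> 0 \<longrightarrow> \<bar>q\<bar> \<le> int N}"

text \<open>z^q (x) A with z e_p = e_{p-1}: (z^q (x) A) (e_p (x) w) = e_{p-q} (x) A w.\<close>
definition shift_mat :: "int \<Rightarrow> complex^'n^'n \<Rightarrow> 'n oper" where
  "shift_mat q M v = (\<lambda>(r, i). \<Sum>j\<in>UNIV. M $ i $ j * v (r + q, j))"

definition loop_op :: "(int \<Rightarrow> complex^'n^'n) \<Rightarrow> 'n oper" where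
  "loop_op A v = (\<lambda>k. \<Sum>q\<in>{q. A q \<noteq> 0}. shift_mat q (A q) v k)"

definition Tiso :: "(int \<Rightarrow> real) \<Rightarrow> 'n oper" where
  "Tiso a v = (\<lambda>(p, i). complex_of_real (sqrt (a p)) * v (p, i))"

definition Tiso_inv :: "(int \<Rightarrow> real) \<Rightarrow> 'n oper" where
  "Tiso_inv a v = (\<lambda>(p, i). v (p, i) / complex_of_real (sqrt (a p)))"

definition transported :: "(int \<Rightarrow> real) \<Rightarrow> (int \<Rightarrow> complex^'n^'n) \<Rightarrow> 'n oper" where
  "transported a A = Tiso a \<circ> loop_op A \<circ> Tiso_inv a"

definition rapidly_decreasing :: "(int \<Rightarrow> real) \<Rightarrow> bool" where
  "rapidly_decreasing a \<longleftrightarrow> (\<forall>k::nat. \<exists>C. \<forall>p. \<bar>real_of_int p\<bar> ^ k * \<bar>a p\<bar> \<le> C)"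

end

theory Submission
  imports Defs "HOL-Computational_Algebra.Polynomial"
begin


definition ss :: "'n vect \<Rightarrow> (int \<times> 'n) set \<Rightarrow> real" where
  "ss v F = (\<Sum>k\<in>F. (cmod (v k))\<^sup>2)"

lemma ss_nonneg: "0 \<le> ss v F"
  unfolding ss_def by (simp add: sum_nonneg)

lemma l2norm_nonneg: "0 \<le> l2norm v"
  unfolding l2norm_def by (simp add: infsum_nonneg)

lemma l2_ss_le:
  assumes "v \<in> l2" "finite F"
  shows "ss v F \<le> (l2norm v)\<^sup>2"
proof -
  have "ss v F \<le> infsum (\<lambda>k. (cmod (v k))\<^sup>2) UNIV"
    unfolding ss_def
    by (rule finite_sum_le_infsum) (use assms in \<open>auto simp: l2_def\<close>)
  also have "\<dots> = (l2norm v)\<^sup>2" unfolding l2norm_def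
    by (simp add: infsum_nonneg)
  finally show ?thesis .
qed

lemma l2I:
  assumes "\<And>F. finite F \<Longrightarrow> ss v F \<le> B\<^sup>2" "0 \<le> B"
  shows "v \<in> l2 \<and> l2norm v \<le> B"
proof -
  have sm: "(\<lambda>k. (cmod (v k))\<^sup>2) summable_on UNIV"
    apply (rule nonneg_bdd_above_summable_on)
     apply simp
    apply (rule bdd_aboveI[where M="B\<^sup>2"])
    using assms(1) unfolding ss_def by auto
  have "infsum (\<lambda>k. (cmod (v k))\<^sup>2) UNIV \<le> B\<^sup>2"
    by (rule infsum_le_finite_sums[OF sm]) (use assms(1) in \<open>auto simp: ss_def\<close>)
  then have "l2norm v \<le> sqrt (B\<^sup>2)" unfolding l2norm_def by (simp del: real_sqrt_abs)
  then show ?thesis using sm assms(2) by (simp add: l2_def)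
qed

lemma zero_l2: "((\<lambda>_. 0) :: 'n vect) \<in> l2 \<and> l2norm ((\<lambda>_. 0) :: 'n vect) \<le> 0"
  by (rule l2I) (auto simp: ss_def)

lemma l2norm_zero: "l2norm ((\<lambda>_. 0) :: 'n vect) = 0"
  using zero_l2 l2norm_nonneg by (metis order_antisym)

lemma basisv_l2: "basisv k \<in> l2 \<and> l2norm (basisv k) \<le> 1"
proof (rule l2I)
  fix F :: "(int \<times> 'a) set" assume "finite F"
  have "ss (basisv k) F = (\<Sum>k'\<in>F. if k' = k then 1 else 0)"
    unfolding ss_def basisv_def by (rule sum.cong) auto
  also have "\<dots> \<le> 1" using \<open>finite F\<close> by (simp add: sum.delta)
  finally show "ss (basisv k) F \<le> 1\<^sup>2" by simp
qed simp



definition band :: "int set \<Rightarrow> (int \<Rightarrow> int \<Rightarrow> 'n \<Rightarrow> 'n \<Rightarrow> complex) \<Rightarrow> 'n::finite oper" where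
  "band Q c v = (\<lambda>(r, i). \<Sum>q\<in>Q. \<Sum>j\<in>UNIV. c q r i j * v (r + q, j))"

lemma shifted_ss:
  fixes v :: "'n::finite vect"
  assumes "v \<in> l2" "finite (F :: (int \<times> 'n) set)"
  shows "(\<Sum>(r,i)\<in>F. (cmod (v (r + q, j)))\<^sup>2) \<le> real CARD('n) * (l2norm v)\<^sup>2"
proof -
  have fin: "finite (fst ` F \<times> (UNIV :: 'n set))" using assms(2) by simp
  have "(\<Sum>(r,i)\<in>F. (cmod (v (r + q, j)))\<^sup>2) \<le> (\<Sum>(r,i)\<in>fst ` F \<times> (UNIV :: 'n set). (cmod (v (r + q, j)))\<^sup>2)"
    by (rule sum_mono2[OF fin]) (force simp: image_iff)+
  also have "\<dots> = (\<Sum>r\<in>fst ` F. \<Sum>i\<in>(UNIV :: 'n set). (cmod (v (r + q, j)))\<^sup>2)"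
    by (rule sum.cartesian_product[symmetric])
  also have "\<dots> = real CARD('n) * (\<Sum>r\<in>fst ` F. (cmod (v (r + q, j)))\<^sup>2)"
    by (simp add: sum_distrib_left)
  also have "(\<Sum>r\<in>fst ` F. (cmod (v (r + q, j)))\<^sup>2) = ss v ((\<lambda>r. (r + q, j)) ` fst ` F)"
    unfolding ss_def by (subst sum.reindex) (auto simp: inj_on_def)
  also have "\<dots> \<le> (l2norm v)\<^sup>2" using assms by (intro l2_ss_le) auto
  finally show ?thesis by (simp add: mult_left_mono)
qed

lemma band_bound:
  fixes v :: "'n::finite vect"
  assumes Q: "finite Q" and cb: "\<forall>q\<in>Q. \<forall>r i j. cmod (c q r i j) \<le> B" and B: "0 \<le> B"
    and v: "v \<in> l2"
  shows "band Q c v \<in> l2 \<and>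
         l2norm (band Q c v) \<le> real (card Q) * real CARD('n) * B * sqrt (real CARD('n)) * l2norm v"
proof (rule l2I)
  define m where "m = real (card Q) * real CARD('n)"
  have m0: "0 \<le> m" by (simp add: m_def)
  have cardM: "real (card (Q \<times> (UNIV :: 'n set))) = m" by (simp add: m_def card_cartesian_product)
  fix F :: "(int \<times> 'n) set" assume F: "finite F"
  have pt: "(cmod (band Q c v (r, i)))\<^sup>2 \<le> m * (\<Sum>(q,j)\<in>Q \<times> UNIV. B\<^sup>2 * (cmod (v (r + q, j)))\<^sup>2)" for r i
  proof -
    have "cmod (band Q c v (r, i)) \<le> (\<Sum>(q,j)\<in>Q \<times> UNIV. cmod (c q r i j * v (r + q, j)))"
      unfolding band_def by (simp add: sum.cartesian_product case_prod_beta norm_sum)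
    also have "\<dots> \<le> (\<Sum>(q,j)\<in>Q \<times> UNIV. B * cmod (v (r + q, j)))"
      by (rule sum_mono) (auto simp: norm_mult intro!: mult_right_mono cb[rule_format])
    finally have h: "cmod (band Q c v (r, i)) \<le> (\<Sum>(q,j)\<in>Q \<times> UNIV. B * cmod (v (r + q, j)))" .
    have "(cmod (band Q c v (r, i)))\<^sup>2 \<le> (\<Sum>(q,j)\<in>Q \<times> UNIV. B * cmod (v (r + q, j)))\<^sup>2"
      using h by (simp add: power_mono)
    also have "\<dots> \<le> (\<Sum>x\<in>Q \<times> UNIV. ((\<lambda>(q,j). B * cmod (v (r + q, j))) x)\<^sup>2) * m"
      using sum_squared_le_sum_of_squares[of "\<lambda>(q,j). B * cmod (v (r + q, j))" "Q \<times> UNIV"] cardM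
      by (simp add: case_prod_beta)
    also have "\<dots> = m * (\<Sum>(q,j)\<in>Q \<times> UNIV. B\<^sup>2 * (cmod (v (r + q, j)))\<^sup>2)"
      by (simp add: case_prod_beta power_mult_distrib mult.commute)
    finally show ?thesis .
  qed
  have "ss (band Q c v) F \<le> (\<Sum>(r,i)\<in>F. m * (\<Sum>(q,j)\<in>Q \<times> UNIV. B\<^sup>2 * (cmod (v (r + q, j)))\<^sup>2))"
    unfolding ss_def by (rule sum_mono) (use pt in auto)
  also have "\<dots> = m * B\<^sup>2 * (\<Sum>(q,j)\<in>Q \<times> UNIV. \<Sum>(r,i)\<in>F. (cmod (v (r + q, j)))\<^sup>2)"
    apply (simp add: sum_distrib_left case_prod_beta)
    apply (subst sum.swap)
    apply (simp add: mult.assoc)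
    done
  also have "\<dots> \<le> m * B\<^sup>2 * (\<Sum>(q,j)\<in>Q \<times> (UNIV :: 'n set). real CARD('n) * (l2norm v)\<^sup>2)"
    apply (rule mult_left_mono)
     apply (rule sum_mono)
    using shifted_ss[OF v F] m0 by (auto simp: case_prod_beta)
  also have "\<dots> = (m * B * sqrt (real CARD('n)) * l2norm v)\<^sup>2"
    using cardM by (simp add: power_mult_distrib power2_eq_square)
  finally show "ss (band Q c v) F \<le> (real (card Q) * real CARD('n) * B * sqrt (real CARD('n)) * l2norm v)\<^sup>2"
    by (simp add: m_def)
next
  show "0 \<le> real (card Q) * real CARD('n) * B * sqrt (real CARD('n)) * l2norm v"
    using B by (simp add: l2norm_nonneg)
qed



lemma band_add: "band Q c (\<lambda>k. u k + v k) = (\<lambda>k. band Q c u k + band Q c v k)"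
  unfolding band_def by (auto simp: distrib_left sum.distrib)

lemma band_scale: "band Q c (\<lambda>k. x * v k) = (\<lambda>k. x * band Q c v k)"
  unfolding band_def by (auto simp: sum_distrib_left mult.left_commute)

lemma band_bounded_op:
  assumes Q: "finite Q" and cb: "\<forall>q\<in>Q. \<forall>r i j. cmod (c q r i j) \<le> B" and B: "0 \<le> B"
  shows "bounded_op (band Q c)"
  unfolding bounded_op_def
  using band_bound[OF Q cb B] by (auto simp: band_add band_scale)

lemma opnorm_band:
  fixes c :: "int \<Rightarrow> int \<Rightarrow> 'n::finite \<Rightarrow> 'n \<Rightarrow> complex"
  assumes Q: "finite Q" and cb: "\<forall>q\<in>Q. \<forall>r i j. cmod (c q r i j) \<le> B" and B: "0 \<le> B"
  shows "opnorm (band Q c) \<le> real (card Q) * real CARD('n) * B * sqrt (real CARD('n))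
         \<and> 0 \<le> opnorm (band Q c)"
proof -
  define K where "K = real (card Q) * real CARD('n) * B * sqrt (real CARD('n))"
  have K0: "0 \<le> K" using B by (simp add: K_def)
  let ?S = "{l2norm (band Q c v) | v. v \<in> l2 \<and> l2norm v \<le> 1}"
  have bnd: "x \<le> K" if xS: "x \<in> ?S" for x
  proof -
    obtain v where v: "v \<in> l2" "l2norm v \<le> 1" "x = l2norm (band Q c v)" using xS by blast
    have "x \<le> K * l2norm v" using band_bound[OF Q cb B v(1)] v(3) by (simp add: K_def)
    also have "\<dots> \<le> K" using v(2) K0 by (simp add: mult_left_le)
    finally show ?thesis .
  qed
  have ne: "l2norm (band Q c (\<lambda>_. 0)) \<in> ?S" using zero_l2 by fastforce
  have "opnorm (band Q c) \<le> K"
    unfolding opnorm_def by (rule cSup_least) (use ne bnd in auto)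
  moreover have "0 \<le> opnorm (band Q c)"
  proof -
    have "l2norm (band Q c (\<lambda>_. 0)) \<le> opnorm (band Q c)"
      unfolding opnorm_def by (rule cSup_upper[OF ne]) (rule bdd_aboveI[where M=K], use bnd in blast)
    then show ?thesis using l2norm_nonneg order_trans by blast
  qed
  ultimately show ?thesis by (simp add: K_def)
qed

lemma band_diff:
  "(\<lambda>v k. band Q c v k - band Q d v k) = band Q (\<lambda>q r i j. c q r i j - d q r i j)"
  unfolding band_def by (auto simp: fun_eq_iff left_diff_distrib sum_subtractf)

definition sig :: "int \<Rightarrow> complex" where
  "sig p = (if p \<ge> 0 then - \<i> else \<i>)"

lemma Jop_sig: "Jop v = (\<lambda>(p, i). sig p * v (p, i))"
  unfolding Jop_def sig_def by auto

lemma commJ_band: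
  "commJ (band Q c) = band Q (\<lambda>q r i j. c q r i j * (sig (r + q) - sig r))"
  unfolding commJ_def band_def Jop_sig
  by (auto simp: fun_eq_iff sum_distrib_left sum_subtractf algebra_simps)

lemma band_basis_zero:
  assumes Q: "Q \<subseteq> {-int N..int N}" and cz: "\<forall>q\<in>Q. \<forall>r i j. r \<notin> {-int N..int N} \<longrightarrow> c q r i j = 0"
    and p: "p \<notin> {-2 * int N..2 * int N}"
  shows "band Q c (basisv (p, j0)) = (\<lambda>_. 0)"
proof -
  have "c q r i j * basisv (p, j0) (r + q, j) = 0" if "q \<in> Q" for q r i j
  proof (cases "r \<in> {-int N..int N}")
    case True
    then have "r + q \<noteq> p" using p Q that by auto
    then show ?thesis by (simp add: basisv_def)
  qed (use cz that in auto)
  then show ?thesis unfolding band_def by (auto simp: fun_eq_iff intro!: sum.neutral)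
qed

lemma hs_band:
  fixes c :: "int \<Rightarrow> int \<Rightarrow> 'n::finite \<Rightarrow> 'n \<Rightarrow> complex"
  assumes Q: "Q \<subseteq> {-int N..int N}" and cz: "\<forall>q\<in>Q. \<forall>r i j. r \<notin> {-int N..int N} \<longrightarrow> c q r i j = 0"
    and cb: "\<forall>q\<in>Q. \<forall>r i j. cmod (c q r i j) \<le> B" and B: "0 \<le> B"
  shows "hilbert_schmidt (band Q c) \<and>
    hsnorm (band Q c) \<le> sqrt (real (card ({-2 * int N..2 * int N} \<times> (UNIV :: 'n set))))
       * (real (card Q) * real CARD('n) * B * sqrt (real CARD('n))) \<and> 0 \<le> hsnorm (band Q c)"
proof -
  define K where "K = real (card Q) * real CARD('n) * B * sqrt (real CARD('n))"
  define P where "P = {-2 * int N..2 * int N} \<times> (UNIV :: 'n set)"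
  have finQ: "finite Q" using Q finite_subset by blast
  have finP: "finite P" by (simp add: P_def)
  let ?f = "\<lambda>k. (l2norm (band Q c (basisv k)))\<^sup>2"
  have z: "?f k = 0" if "k \<notin> P" for k
  proof -
    obtain p j0 where k: "k = (p, j0)" by (cases k)
    have "p \<notin> {-2 * int N..2 * int N}" using that k by (auto simp: P_def)
    then show ?thesis using band_basis_zero[OF Q cz] k l2norm_zero by simp
  qed
  have le: "l2norm (band Q c (basisv k)) \<le> K" for k
  proof -
    have "l2norm (band Q c (basisv k)) \<le> K * l2norm (basisv k)"
      using band_bound[OF finQ cb B, of "basisv k"] basisv_l2[of k] by (simp add: K_def)
    also have "\<dots> \<le> K" using basisv_l2[of k] B by (simp add: K_def mult_left_le)
    finally show ?thesis .
  qed
  have hs: "?f summable_on UNIV"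
    using summable_on_cong_neutral[of UNIV P ?f ?f] z finP by auto
  have eq: "infsum ?f UNIV = sum ?f P"
    using infsum_cong_neutral[of UNIV P ?f ?f] z finP by auto
  have "sum ?f P \<le> sum (\<lambda>_. K\<^sup>2) P"
    by (rule sum_mono) (use le l2norm_nonneg in \<open>auto intro: power_mono\<close>)
  also have "\<dots> = (sqrt (real (card P)) * K)\<^sup>2" by (simp add: power_mult_distrib)
  finally have "hsnorm (band Q c) \<le> sqrt ((sqrt (real (card P)) * K)\<^sup>2)"
    unfolding hsnorm_def eq by (simp del: real_sqrt_abs)
  also have "\<dots> = sqrt (real (card P)) * K" using B by (simp add: K_def)
  finally show ?thesis using hs unfolding hilbert_schmidt_def P_def K_def
    by (simp add: hsnorm_def infsum_nonneg)
qed



definition wt :: "(int \<Rightarrow> real) \<Rightarrow> real \<Rightarrow> int \<Rightarrow> int \<Rightarrow> real" where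
  "wt a t r q = (a r / a (r + q)) powr ((1 - t) / 2)"

lemma wt_pos: "\<forall>p. a p > 0 \<Longrightarrow> 0 < wt a t r q"
  unfolding wt_def by (metis divide_pos_pos powr_gt_zero less_irrefl)

lemma wt_q0: "\<forall>p. a p > 0 \<Longrightarrow> wt a t r 0 = 1"
  unfolding wt_def by (simp add: less_imp_neq[symmetric])

lemma wt_mult: assumes "\<forall>p. a p > 0"
  shows "wt a t r q * wt a t (r + q) q' = wt a t r (q + q')"
proof -
  have "a r / a (r + q) * (a (r + q) / a (r + q + q')) = a r / a (r + (q + q'))"
    using assms by (simp add: add.assoc less_imp_neq[symmetric])
  moreover have "(a r / a (r + q)) powr s * (a (r + q) / a (r + q + q')) powr s
     = (a r / a (r + q) * (a (r + q) / a (r + q + q'))) powr s" for s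
    by (rule powr_mult[symmetric])
  ultimately show ?thesis unfolding wt_def by simp
qed

lemma wt_t1: "\<forall>p. a p > 0 \<Longrightarrow> wt a 1 r q = 1"
  unfolding wt_def by (simp add: less_imp_neq[symmetric])

lemma wt_t0: "\<forall>p. a p > 0 \<Longrightarrow> wt a 0 r q = sqrt (a r) / sqrt (a (r + q))"
  unfolding wt_def by (simp add: powr_half_sqrt less_imp_le real_sqrt_divide)

lemma ratio_step:
  fixes a :: "int \<Rightarrow> real"
  assumes pos: "\<forall>p. a p > 0" and symm: "\<forall>p. a p = a (- p)" and C: "\<forall>p. a p / a (p + 1) \<le> C"
  shows "a p / a (p + 1) \<le> max C 1" "a (p + 1) / a p \<le> max C 1"
proof -
  show "a p / a (p + 1) \<le> max C 1" using C[rule_format, of p] by (simp add: le_max_iff_disj)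
  have e1: "a (p + 1) = a (- p - 1)" using symm[rule_format, of "p + 1"] by simp
  have e2: "a p = a (- p - 1 + 1)" using symm[rule_format, of p] by simp
  have "a (p + 1) / a p = a (- p - 1) / a (- p - 1 + 1)" using e1 e2 by simp
  then show "a (p + 1) / a p \<le> max C 1" using C[rule_format, of "- p - 1"] by (simp add: le_max_iff_disj)
qed

lemma ratio_nat:
  fixes a :: "int \<Rightarrow> real"
  assumes pos: "\<forall>p. a p > 0" and symm: "\<forall>p. a p = a (- p)" and C: "\<forall>p. a p / a (p + 1) \<le> C"
  shows "a r / a (r + int k) \<le> (max C 1) ^ k \<and> a (r + int k) / a r \<le> (max C 1) ^ k"
proof (induction k arbitrary: r)
  case 0
  have "a r \<noteq> 0" using pos by (metis less_irrefl)
  then show ?case by simp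
next
  case (Suc k)
  define D where "D = max C 1"
  have D1: "1 \<le> D" by (simp add: D_def)
  have s1: "a (r + int k) / a (r + int k + 1) \<le> D" "a (r + int k + 1) / a (r + int k) \<le> D"
    using ratio_step[OF pos symm C] by (auto simp: D_def)
  have ih: "a r / a (r + int k) \<le> D ^ k" "a (r + int k) / a r \<le> D ^ k" using Suc.IH by (auto simp: D_def)
  have rk: "r + int (Suc k) = r + int k + 1" by simp
  have e1: "a r / a (r + int (Suc k)) = (a r / a (r + int k)) * (a (r + int k) / a (r + int k + 1))"
    unfolding rk using pos by (simp add: less_imp_neq[symmetric])
  have e2: "a (r + int (Suc k)) / a r = (a (r + int k + 1) / a (r + int k)) * (a (r + int k) / a r)"
    unfolding rk using pos by (simp add: less_imp_neq[symmetric])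
  have n1: "0 \<le> a r / a (r + int k)" "0 \<le> a (r + int k + 1) / a (r + int k)"
     "0 \<le> a (r + int k) / a (r + int k + 1)"
    using pos by (auto simp: less_imp_le)
  have "a r / a (r + int (Suc k)) \<le> D ^ k * D"
    unfolding e1 by (rule mult_mono) (use ih s1 n1 D1 in auto)
  moreover have "a (r + int (Suc k)) / a r \<le> D * D ^ k"
    unfolding e2 by (rule mult_mono) (use ih s1 n1 D1 pos in \<open>auto simp: less_imp_le\<close>)
  ultimately show ?case by (simp add: D_def mult.commute)
qed

lemma ratio_bound:
  fixes a :: "int \<Rightarrow> real"
  assumes pos: "\<forall>p. a p > 0" and symm: "\<forall>p. a p = a (- p)" and C: "\<forall>p. a p / a (p + 1) \<le> C"
    and q: "\<bar>q\<bar> \<le> int N"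
  shows "a r / a (r + q) \<le> (max C 1) ^ N \<and> a (r + q) / a r \<le> (max C 1) ^ N"
proof -
  define k where "k = nat \<bar>q\<bar>"
  have kN: "k \<le> N" using q by (simp add: k_def)
  have mono: "(max C 1) ^ k \<le> (max C 1) ^ N" by (simp add: power_increasing kN)
  show ?thesis
  proof (cases "q \<ge> 0")
    case True
    then have "q = int k" by (simp add: k_def)
    then show ?thesis using ratio_nat[OF pos symm C, of r k] mono by auto
  next
    case False
    then have qk: "r = (r + q) + int k" by (simp add: k_def)
    have "a (r + q) / a (r + q + int k) \<le> (max C 1) ^ k \<and> a (r + q + int k) / a (r + q) \<le> (max C 1) ^ k"
      by (rule ratio_nat[OF pos symm C])
    then show ?thesis using mono qk by (metis order_trans)
  qed
qed

lemma abs_exp_minus_one: "\<bar>exp (y::real) - 1\<bar> \<le> exp \<bar>y\<bar> - 1"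
proof (cases "y \<ge> 0")
  case True
  then have "exp y \<ge> 1" by simp
  then show ?thesis using True by simp
next
  case False
  have "exp y + exp (- y) \<ge> 2"
  proof -
    have "0 \<le> (exp y - 1)\<^sup>2 / exp y" by simp
    also have "(exp y - 1)\<^sup>2 / exp y = exp y + exp (- y) - 2"
      by (simp add: field_simps power2_eq_square exp_minus)
    finally show ?thesis by simp
  qed
  then show ?thesis using False by simp
qed



lemma wt_bounds:
  fixes a :: "int \<Rightarrow> real"
  assumes pos: "\<forall>p. a p > 0" and symm: "\<forall>p. a p = a (- p)" and C: "\<forall>p. a p / a (p + 1) \<le> C"
    and q: "\<bar>q\<bar> \<le> int N" and t: "t \<in> {0..1}" and t0: "t0 \<in> {0..1}"
  shows "wt a t r q \<le> (max C 1) ^ N \<and>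
    \<bar>wt a t r q - wt a t0 r q\<bar> \<le> (max C 1) ^ N * (exp (\<bar>t - t0\<bar> * ln ((max C 1) ^ N)) - 1)"
proof -
  define L where "L = (max C 1) ^ N"
  have L1: "1 \<le> L" unfolding L_def by simp
  define x where "x = ln (a r / a (r + q))"
  have rb: "a r / a (r + q) \<le> L" "a (r + q) / a r \<le> L"
    using ratio_bound[OF pos symm C q] by (auto simp: L_def)
  have rp: "0 < a r / a (r + q)" using pos by simp
  have nz: "a r \<noteq> 0" "a (r + q) \<noteq> 0" using pos by (metis less_irrefl)+
  have x1: "x \<le> ln L" unfolding x_def using rb(1) rp by simp
  have x2: "- x \<le> ln L"
  proof -
    have "- x = ln (a (r + q) / a r)" unfolding x_def using pos by (simp add: ln_div)
    also have "\<dots> \<le> ln L" using rb(2) pos L1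
      by (subst ln_le_cancel_iff) (auto simp: divide_pos_pos)
    finally show ?thesis .
  qed
  have ax: "\<bar>x\<bar> \<le> ln L" using x1 x2 by simp
  have wexp: "wt a s r q = exp ((1 - s) / 2 * x)" for s
    unfolding wt_def x_def using rp nz by (simp add: powr_def mult.commute)
  have gen: "exp (s * x) \<le> L" if "\<bar>s\<bar> \<le> 1" for s
  proof -
    have "s * x \<le> \<bar>s\<bar> * \<bar>x\<bar>" by (metis abs_ge_self abs_mult)
    also have "\<dots> \<le> 1 * ln L" using that ax by (intro mult_mono) auto
    finally have "exp (s * x) \<le> exp (ln L)" by simp
    then show ?thesis using L1 by simp
  qed
  have b1: "wt a t r q \<le> L" unfolding wexp by (rule gen) (use t in auto)
  have "\<bar>wt a t r q - wt a t0 r q\<bar> = exp ((1 - t0) / 2 * x) * \<bar>exp ((t0 - t) / 2 * x) - 1\<bar>"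
    unfolding wexp
  proof -
    have "exp ((1 - t) / 2 * x) = exp ((1 - t0) / 2 * x) * exp ((t0 - t) / 2 * x)"
      by (simp add: exp_add[symmetric] algebra_simps add_divide_distrib[symmetric] diff_divide_distrib[symmetric])
    moreover have "\<bar>E * F - E\<bar> = E * \<bar>F - 1\<bar>" if "E > 0" for E F :: real
      using that by (metis abs_mult abs_of_pos mult.right_neutral right_diff_distrib)
    ultimately show "\<bar>exp ((1 - t) / 2 * x) - exp ((1 - t0) / 2 * x)\<bar> = exp ((1 - t0) / 2 * x) * \<bar>exp ((t0 - t) / 2 * x) - 1\<bar>"
      by simp
  qed
  also have "\<dots> \<le> L * (exp (\<bar>t - t0\<bar> * ln L) - 1)"
  proof (rule mult_mono)
    show "exp ((1 - t0) / 2 * x) \<le> L" by (rule gen) (use t0 in auto)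
    have "\<bar>(t0 - t) / 2 * x\<bar> \<le> \<bar>t - t0\<bar> * ln L"
    proof -
      have "\<bar>(t0 - t) / 2 * x\<bar> = \<bar>t - t0\<bar> / 2 * \<bar>x\<bar>" by (simp add: abs_mult abs_minus_commute)
      also have "\<dots> \<le> \<bar>t - t0\<bar> * ln L" using ax L1
        by (intro mult_mono) auto
      finally show ?thesis .
    qed
    then show "\<bar>exp ((t0 - t) / 2 * x) - 1\<bar> \<le> exp (\<bar>t - t0\<bar> * ln L) - 1"
      using abs_exp_minus_one[of "(t0 - t) / 2 * x"] by (smt (verit) exp_le_cancel_iff)
  qed (use L1 in auto)
  finally show ?thesis using b1 by (simp add: L_def)
qed



lemma circle_infinite: "infinite {z::complex. cmod z = 1}"
proof
  assume fin: "finite {z::complex. cmod z = 1}"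
  let ?f = "\<lambda>x. Complex x (sqrt (1 - x\<^sup>2))"
  have sub: "?f ` {-1..1} \<subseteq> {z. cmod z = 1}"
  proof
    fix z assume "z \<in> ?f ` {-1..1::real}"
    then obtain x where x: "x \<in> {-1..1}" "z = ?f x" by auto
    have "x\<^sup>2 \<le> 1" using x(1) by (simp add: abs_square_le_1 abs_le_iff)
    then show "z \<in> {z. cmod z = 1}" using x by (simp add: complex_norm)
  qed
  have inj: "inj_on ?f {-1..1}" by (auto simp: inj_on_def)
  have "finite (?f ` {-1..1})" using fin sub finite_subset by blast
  then have "finite {-1..1::real}" using finite_image_iff[OF inj] by simp
  then show False using infinite_Icc[of "-1::real" 1] by simp
qed

lemma laurent_zero:
  fixes c :: "int \<Rightarrow> complex"
  assumes h: "\<And>z. cmod z = 1 \<Longrightarrow> (\<Sum>m\<in>{-int M..int M}. c m * z powi m) = 0"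
  shows "\<forall>m\<in>{-int M..int M}. c m = 0"
proof -
  define S where "S = {-int M..int M}"
  define p where "p = (\<Sum>m\<in>S. monom (c m) (nat (m + int M)))"
  have coeffp: "coeff p (nat (m0 + int M)) = c m0" if m0: "m0 \<in> S" for m0
  proof -
    have "coeff p (nat (m0 + int M)) = (\<Sum>m\<in>S. if m = m0 then c m else 0)"
      unfolding p_def coeff_sum
      by (rule sum.cong) (use m0 in \<open>auto simp: S_def\<close>)
    also have "\<dots> = c m0" using m0 by (simp add: S_def)
    finally show ?thesis .
  qed
  have roots: "poly p z = 0" if z: "cmod z = 1" for z
  proof -
    have z0: "z \<noteq> 0" using z by auto
    have "poly p z = (\<Sum>m\<in>S. c m * z ^ nat (m + int M))"
      unfolding p_def poly_sum poly_monom ..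
    also have "\<dots> = (\<Sum>m\<in>S. z ^ M * (c m * z powi m))"
    proof (rule sum.cong)
      fix m assume "m \<in> S"
      then have "z ^ nat (m + int M) = z powi (m + int M)" by (simp add: S_def power_int_def)
      also have "\<dots> = z powi m * z ^ M" using z0 by (simp add: power_int_add)
      finally show "c m * z ^ nat (m + int M) = z ^ M * (c m * z powi m)" by simp
    qed simp
    also have "\<dots> = z ^ M * (\<Sum>m\<in>S. c m * z powi m)" by (simp add: sum_distrib_left)
    also have "\<dots> = 0" using h[OF z] by (simp add: S_def)
    finally show ?thesis .
  qed
  have "p = 0"
  proof (rule ccontr)
    assume "p \<noteq> 0"
    then have "finite {z. poly p z = 0}" by (rule poly_roots_finite)
    moreover have "{z. cmod z = 1} \<subseteq> {z. poly p z = 0}" using roots by auto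
    ultimately show False using circle_infinite finite_subset by blast
  qed
  then show ?thesis using coeffp by (auto simp: S_def)
qed

lemma reindex_conv:
  fixes f :: "int \<Rightarrow> int \<Rightarrow> 'a::comm_monoid_add"
  assumes "\<And>q m. q \<in> {-int N..int N} \<Longrightarrow> m - q \<notin> {-int N..int N} \<Longrightarrow> f q m = 0"
  shows "(\<Sum>q\<in>{-int N..int N}. \<Sum>q'\<in>{-int N..int N}. f q (q + q'))
       = (\<Sum>m\<in>{-2 * int N..2 * int N}. \<Sum>q\<in>{-int N..int N}. f q m)"
proof -
  have "(\<Sum>q'\<in>{-int N..int N}. f q (q + q')) = (\<Sum>m\<in>{-2 * int N..2 * int N}. f q m)"
    if q: "q \<in> {-int N..int N}" for q
  proof -
    have "(\<Sum>q'\<in>{-int N..int N}. f q (q + q')) = (\<Sum>m\<in>(\<lambda>q'. q + q') ` {-int N..int N}. f q m)"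
      by (subst sum.reindex) (auto simp: inj_on_def)
    also have "\<dots> = (\<Sum>m\<in>{-2 * int N..2 * int N}. f q m)"
    proof (rule sum.mono_neutral_left)
      show "(\<lambda>q'. q + q') ` {-int N..int N} \<subseteq> {-2 * int N..2 * int N}" using q by auto
      show "\<forall>m\<in>{-2 * int N..2 * int N} - (\<lambda>q'. q + q') ` {- int N..int N}. f q m = 0"
      proof
        fix m assume m: "m \<in> {-2 * int N..2 * int N} - (\<lambda>q'. q + q') ` {- int N..int N}"
        have "m - q \<notin> {-int N..int N}"
        proof
          assume "m - q \<in> {-int N..int N}"
          then have "m \<in> (\<lambda>q'. q + q') ` {- int N..int N}" by (auto intro!: image_eqI[of _ _ "m - q"])
          then show False using m by blast
        qed
        then show "f q m = 0" using assms q by blast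
      qed
    qed simp
    finally show ?thesis .
  qed
  then have "(\<Sum>q\<in>{-int N..int N}. \<Sum>q'\<in>{-int N..int N}. f q (q + q'))
       = (\<Sum>q\<in>{-int N..int N}. \<Sum>m\<in>{-2 * int N..2 * int N}. f q m)" by (rule sum.cong[OF refl])
  also have "\<dots> = (\<Sum>m\<in>{-2 * int N..2 * int N}. \<Sum>q\<in>{-int N..int N}. f q m)" by (rule sum.swap)
  finally show ?thesis .
qed

lemma loop_eval_N:
  fixes X :: "int \<Rightarrow> complex^'n::finite^'n"
  assumes "\<forall>q. X q \<noteq> 0 \<longrightarrow> q \<in> {-int N..int N}"
  shows "loop_eval X z $ i $ j = (\<Sum>q\<in>{-int N..int N}. z powi q * X q $ i $ j)"
proof -
  have "loop_eval X z $ i $ j = (\<Sum>q\<in>{q. X q \<noteq> 0}. z powi q * X q $ i $ j)"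
    unfolding loop_eval_def by simp
  also have "\<dots> = (\<Sum>q\<in>{-int N..int N}. z powi q * X q $ i $ j)"
    by (rule sum.mono_neutral_left) (use assms in auto)
  finally show ?thesis .
qed

lemma loop_eval_prod:
  fixes X Y :: "int \<Rightarrow> complex^'n::finite^'n"
  assumes sX: "\<forall>q. X q \<noteq> 0 \<longrightarrow> q \<in> {-int N..int N}"
    and sY: "\<forall>q. Y q \<noteq> 0 \<longrightarrow> q \<in> {-int N..int N}" and z0: "z \<noteq> 0"
  shows "(loop_eval X z ** loop_eval Y z) $ i $ k
     = (\<Sum>m\<in>{-2 * int N..2 * int N}. z powi m * (\<Sum>q\<in>{-int N..int N}. (X q ** Y (m - q)) $ i $ k))"
proof -
  have Y0: "\<And>m. m \<notin> {-int N..int N} \<Longrightarrow> Y m = 0" using sY by blast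
  have "(loop_eval X z ** loop_eval Y z) $ i $ k
     = (\<Sum>j\<in>UNIV. (\<Sum>q\<in>{-int N..int N}. z powi q * X q $ i $ j) * (\<Sum>q'\<in>{-int N..int N}. z powi q' * Y q' $ j $ k))"
    unfolding matrix_matrix_mult_def using loop_eval_N[OF sX] loop_eval_N[OF sY] by simp
  also have "\<dots> = (\<Sum>q\<in>{-int N..int N}. \<Sum>q'\<in>{-int N..int N}. z powi (q + q') * (X q ** Y q') $ i $ k)"
    unfolding matrix_matrix_mult_def
    apply (simp add: sum_product sum_distrib_left power_int_add z0 mult_ac sum.swap[of _ UNIV])
    apply (rule sum.cong[OF refl])
    apply (subst sum.swap)
    apply (simp add: mult_ac)
    done
  also have "\<dots> = (\<Sum>q\<in>{-int N..int N}. \<Sum>q'\<in>{-int N..int N}.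
        (\<lambda>q m. z powi m * (X q ** Y (m - q)) $ i $ k) q (q + q'))" by simp
  also have "\<dots> = (\<Sum>m\<in>{-2 * int N..2 * int N}. \<Sum>q\<in>{-int N..int N}. z powi m * (X q ** Y (m - q)) $ i $ k)"
    by (rule reindex_conv) (use Y0 in \<open>simp add: matrix_matrix_mult_def\<close>)
  also have "\<dots> = (\<Sum>m\<in>{-2 * int N..2 * int N}. z powi m * (\<Sum>q\<in>{-int N..int N}. (X q ** Y (m - q)) $ i $ k))"
    by (simp add: sum_distrib_left)
  finally show ?thesis .
qed



lemma conv_id:
  fixes X Y :: "int \<Rightarrow> complex^'n::finite^'n"
  assumes sX: "\<forall>q. X q \<noteq> 0 \<longrightarrow> q \<in> {-int N..int N}"
    and sY: "\<forall>q. Y q \<noteq> 0 \<longrightarrow> q \<in> {-int N..int N}"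
    and prod: "\<forall>z. cmod z = 1 \<longrightarrow> loop_eval X z ** loop_eval Y z = mat 1"
    and m: "m \<in> {-2 * int N..2 * int N}"
  shows "(\<Sum>q\<in>{-int N..int N}. (X q ** Y (m - q)) $ i $ k) = (if m = 0 then mat 1 $ i $ k else 0)"
proof -
  define c where "c m = (\<Sum>q\<in>{-int N..int N}. (X q ** Y (m - q)) $ i $ k) - (if m = 0 then mat 1 $ i $ k else 0)" for m
  have "\<forall>m\<in>{-int (2 * N)..int (2 * N)}. c m = 0"
  proof (rule laurent_zero)
    fix z :: complex assume z: "cmod z = 1"
    then have z0: "z \<noteq> 0" by auto
    have e: "c m * z powi m = z powi m * (\<Sum>q\<in>{-int N..int N}. (X q ** Y (m - q)) $ i $ k)
       - (if m = 0 then mat 1 $ i $ k else 0)" for m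
      unfolding c_def by (cases "m = 0") (simp_all add: algebra_simps)
    have "(\<Sum>m\<in>{-int (2 * N)..int (2 * N)}. c m * z powi m)
      = (\<Sum>m\<in>{-2 * int N..2 * int N}. z powi m * (\<Sum>q\<in>{-int N..int N}. (X q ** Y (m - q)) $ i $ k))
        - (\<Sum>m\<in>{-2 * int N..2 * int N}. if m = 0 then mat 1 $ i $ k else 0)"
      unfolding e by (simp add: sum_subtractf)
    also have "\<dots> = (loop_eval X z ** loop_eval Y z) $ i $ k - mat 1 $ i $ k"
      using loop_eval_prod[OF sX sY z0] by simp
    also have "\<dots> = 0" using prod z by simp
    finally show "(\<Sum>m\<in>{-int (2 * N)..int (2 * N)}. c m * z powi m) = 0" .
  qed
  then show ?thesis using m by (simp add: c_def)
qed

lemma swap3: "(\<Sum>j\<in>A. \<Sum>q\<in>B. \<Sum>k\<in>C. f j q k) = (\<Sum>q\<in>B. \<Sum>k\<in>C. \<Sum>j\<in>A. f j q k)"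
proof -
  have "(\<Sum>j\<in>A. \<Sum>q\<in>B. \<Sum>k\<in>C. f j q k) = (\<Sum>q\<in>B. \<Sum>j\<in>A. \<Sum>k\<in>C. f j q k)"
    by (rule sum.swap)
  also have "\<dots> = (\<Sum>q\<in>B. \<Sum>k\<in>C. \<Sum>j\<in>A. f j q k)"
    by (rule sum.cong[OF refl], rule sum.swap)
  finally show ?thesis .
qed

lemma band_comp_id:
  fixes X Y :: "int \<Rightarrow> complex^'n::finite^'n" and w :: "int \<Rightarrow> int \<Rightarrow> complex"
  assumes sY: "\<forall>q. Y q \<noteq> 0 \<longrightarrow> q \<in> {-int N..int N}"
    and conv: "\<And>m i k. m \<in> {-2 * int N..2 * int N} \<Longrightarrow>
        (\<Sum>q\<in>{-int N..int N}. (X q ** Y (m - q)) $ i $ k) = (if m = 0 then mat 1 $ i $ k else 0)"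
    and w0: "\<And>r. w r 0 = 1" and wm: "\<And>r q q'. w r q * w (r + q) q' = w r (q + q')"
  shows "band {-int N..int N} (\<lambda>q r i j. X q $ i $ j * w r q)
           (band {-int N..int N} (\<lambda>q r i j. Y q $ i $ j * w r q) v) = v"
proof (rule ext, clarify)
  fix r :: int and i :: 'n
  let ?Q = "{-int N..int N}"
  have Y0: "\<And>m. m \<notin> ?Q \<Longrightarrow> Y m = 0" using sY by blast
  define g where "g q m = (\<Sum>k\<in>UNIV. (X q ** Y (m - q)) $ i $ k * w r m * v (r + m, k))" for q m
  have "band ?Q (\<lambda>q r i j. X q $ i $ j * w r q) (band ?Q (\<lambda>q r i j. Y q $ i $ j * w r q) v) (r, i)
     = (\<Sum>q\<in>?Q. \<Sum>j\<in>UNIV. X q $ i $ j * w r q *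
          (\<Sum>q'\<in>?Q. \<Sum>k\<in>UNIV. Y q' $ j $ k * w (r + q) q' * v (r + q + q', k)))"
    unfolding band_def by simp
  also have "\<dots> = (\<Sum>q\<in>?Q. \<Sum>j\<in>UNIV. \<Sum>q'\<in>?Q. \<Sum>k\<in>UNIV.
          X q $ i $ j * Y q' $ j $ k * w r (q + q') * v (r + (q + q'), k))"
    by (simp add: sum_distrib_left wm[symmetric] mult_ac add.assoc)
  also have "\<dots> = (\<Sum>q\<in>?Q. \<Sum>q'\<in>?Q. \<Sum>k\<in>UNIV. \<Sum>j\<in>UNIV.
          X q $ i $ j * Y q' $ j $ k * w r (q + q') * v (r + (q + q'), k))"
  proof (rule sum.cong[OF refl])
    fix q
    show "(\<Sum>j\<in>UNIV. \<Sum>q'\<in>?Q. \<Sum>k\<in>UNIV. X q $ i $ j * Y q' $ j $ k * w r (q + q') * v (r + (q + q'), k))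
       = (\<Sum>q'\<in>?Q. \<Sum>k\<in>UNIV. \<Sum>j\<in>UNIV. X q $ i $ j * Y q' $ j $ k * w r (q + q') * v (r + (q + q'), k))"
      by (rule swap3)
  qed
  also have "\<dots> = (\<Sum>q\<in>?Q. \<Sum>q'\<in>?Q. g q (q + q'))"
    unfolding g_def matrix_matrix_mult_def by (simp add: sum_distrib_right)
  also have "\<dots> = (\<Sum>m\<in>{-2 * int N..2 * int N}. \<Sum>q\<in>?Q. g q m)"
    by (rule reindex_conv) (simp add: g_def Y0 matrix_matrix_mult_def)
  also have "\<dots> = (\<Sum>m\<in>{-2 * int N..2 * int N}. \<Sum>k\<in>UNIV.
        (\<Sum>q\<in>?Q. (X q ** Y (m - q)) $ i $ k) * w r m * v (r + m, k))"
    unfolding g_def by (simp add: sum_distrib_right sum.swap[of _ ?Q])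
  also have "\<dots> = (\<Sum>m\<in>{-2 * int N..2 * int N}. \<Sum>k\<in>UNIV.
        (if m = 0 then mat 1 $ i $ k * v (r, k) else 0))"
    by (rule sum.cong[OF refl], rule sum.cong[OF refl]) (simp add: conv w0)
  also have "\<dots> = (\<Sum>k\<in>UNIV. mat 1 $ i $ k * v (r, k))"
    by (subst sum.swap) simp
  also have "\<dots> = v (r, i)"
    by (simp add: mat_def if_distrib[of "\<lambda>x. x * _"] cong: if_cong)
  finally show "band ?Q (\<lambda>q r i j. X q $ i $ j * w r q) (band ?Q (\<lambda>q r i j. Y q $ i $ j * w r q) v) (r, i) = v (r, i)" .
qed



definition Hmap :: "(int \<Rightarrow> real) \<Rightarrow> real \<Rightarrow> (int \<Rightarrow> complex^'n^'n) \<Rightarrow> 'n::finite oper" where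
  "Hmap a t A = band {q. A q \<noteq> 0} (\<lambda>q r i j. A q $ i $ j * complex_of_real (wt a t r q))"

definition cA :: "(int \<Rightarrow> real) \<Rightarrow> real \<Rightarrow> (int \<Rightarrow> complex^'n^'n) \<Rightarrow> int \<Rightarrow> int \<Rightarrow> 'n \<Rightarrow> 'n \<Rightarrow> complex" where
  "cA a t A q r i j = A q $ i $ j * complex_of_real (wt a t r q)"

lemma band_ext_supp:
  assumes "{q. A q \<noteq> 0} \<subseteq> Q" "finite Q" "\<And>q r i j. A q = 0 \<Longrightarrow> c q r i j = 0"
  shows "band {q. A q \<noteq> 0} c = band Q c"
proof -
  have "(\<Sum>q\<in>{q. A q \<noteq> 0}. \<Sum>j\<in>UNIV. c q r i j * v (r + q, j)) = (\<Sum>q\<in>Q. \<Sum>j\<in>UNIV. c q r i j * v (r + q, j))"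
    for r i v
    by (rule sum.mono_neutral_left) (use assms in auto)
  then show ?thesis unfolding band_def by (auto simp: fun_eq_iff)
qed

lemma Hmap_N:
  assumes "\<forall>q. A q \<noteq> 0 \<longrightarrow> q \<in> {-int N..int N}"
  shows "Hmap a t A = band {-int N..int N} (cA a t A)"
  unfolding Hmap_def cA_def[abs_def] by (rule band_ext_supp) (use assms in auto)

lemma Hmap_t0:
  assumes pos: "\<forall>p. a p > 0"
  shows "Hmap a 0 A v = transported a A v"
proof -
  have "Hmap a 0 A v (r, i) = transported a A v (r, i)" for r i
  proof -
    have "transported a A v (r, i) = complex_of_real (sqrt (a r)) *
       (\<Sum>q\<in>{q. A q \<noteq> 0}. \<Sum>j\<in>UNIV. A q $ i $ j * (v (r + q, j) / complex_of_real (sqrt (a (r + q)))))"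
      unfolding transported_def Tiso_def Tiso_inv_def loop_op_def shift_mat_def by simp
    also have "\<dots> = (\<Sum>q\<in>{q. A q \<noteq> 0}. \<Sum>j\<in>UNIV. A q $ i $ j *
          complex_of_real (sqrt (a r) / sqrt (a (r + q))) * v (r + q, j))"
      by (simp add: sum_distrib_left mult_ac)
    also have "\<dots> = Hmap a 0 A v (r, i)"
      unfolding Hmap_def band_def using wt_t0[OF pos] by simp
    finally show ?thesis by simp
  qed
  then show ?thesis by auto
qed

lemma Hmap_t1:
  assumes pos: "\<forall>p. a p > 0"
  shows "Hmap a 1 A v = loop_op A v"
  unfolding Hmap_def band_def loop_op_def shift_mat_def using wt_t1[OF pos] by (auto simp: fun_eq_iff)

definition Aadj :: "(int \<Rightarrow> complex^'n^'n) \<Rightarrow> int \<Rightarrow> complex^'n^'n" where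
  "Aadj A q = mat_adj (A (- q))"

lemma Aadj_supp:
  assumes "\<forall>q. A q \<noteq> 0 \<longrightarrow> q \<in> {-int N..int N}"
  shows "\<forall>q. Aadj A q \<noteq> 0 \<longrightarrow> q \<in> {-int N..int N}"
proof (intro allI impI)
  fix q assume "Aadj A q \<noteq> 0"
  then have "A (- q) \<noteq> 0" by (auto simp: Aadj_def mat_adj_def vec_eq_iff)
  then show "q \<in> {-int N..int N}" using assms by force
qed

lemma cnj_powi_circle:
  assumes "cmod z = 1"
  shows "cnj (z powi q) = z powi (- q)"
proof -
  have "z * cnj z = 1" using complex_norm_square[of z] assms by simp
  then have "cnj z = inverse z" by (metis inverse_unique)
  then show ?thesis by (simp add: power_int_minus power_int_inverse)
qed

lemma loop_eval_adj:
  fixes A :: "int \<Rightarrow> complex^'n::finite^'n"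
  assumes s: "\<forall>q. A q \<noteq> 0 \<longrightarrow> q \<in> {-int N..int N}" and z: "cmod z = 1"
  shows "loop_eval (Aadj A) z = mat_adj (loop_eval A z)"
proof -
  have "loop_eval (Aadj A) z $ i $ j = mat_adj (loop_eval A z) $ i $ j" for i j
  proof -
    have "loop_eval (Aadj A) z $ i $ j = (\<Sum>q\<in>{-int N..int N}. z powi q * cnj (A (- q) $ j $ i))"
      using loop_eval_N[OF Aadj_supp[OF s], of z i j] by (simp add: Aadj_def[abs_def] mat_adj_def)
    also have "\<dots> = (\<Sum>q\<in>uminus ` {-int N..int N}. z powi (- q) * cnj (A q $ j $ i))"
      by (subst sum.reindex) (auto simp: inj_on_def)
    also have "uminus ` {-int N..int N} = {-int N..int N}" by (auto intro!: image_eqI[of _ _ "- x" for x])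
    also have "(\<Sum>q\<in>{-int N..int N}. z powi (- q) * cnj (A q $ j $ i))
        = cnj (\<Sum>q\<in>{-int N..int N}. z powi q * A q $ j $ i)"
      using cnj_powi_circle[OF z] by simp
    also have "\<dots> = mat_adj (loop_eval A z) $ i $ j"
      using loop_eval_N[OF s] by (simp add: mat_adj_def)
    finally show ?thesis .
  qed
  then show ?thesis by (simp add: vec_eq_iff)
qed



lemma finite_supp_bound:
  assumes "finite {q::int. A q \<noteq> 0}"
  shows "\<exists>N. \<forall>q. A q \<noteq> 0 \<longrightarrow> q \<in> {-int N..int N}"
proof -
  define S where "S = {q::int. A q \<noteq> 0}"
  define N where "N = nat (Max (insert 0 (abs ` S)))"
  have "q \<in> {-int N..int N}" if "A q \<noteq> 0" for q
  proof -
    have "\<bar>q\<bar> \<le> Max (insert 0 (abs ` S))"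
      using assms that by (intro Max_ge) (auto simp: S_def)
    then show ?thesis by (auto simp: N_def)
  qed
  then show ?thesis by blast
qed

definition amax :: "(int \<Rightarrow> complex^'n::finite^'n) \<Rightarrow> nat \<Rightarrow> real" where
  "amax A N = (\<Sum>q\<in>{-int N..int N}. \<Sum>i\<in>UNIV. \<Sum>j\<in>UNIV. cmod (A q $ i $ j))"

lemma amax_ge:
  assumes "q \<in> {-int N..int N}"
  shows "cmod (A q $ i $ j) \<le> amax A N"
proof -
  have "cmod (A q $ i $ j) \<le> (\<Sum>j\<in>UNIV. cmod (A q $ i $ j))"
    by (rule member_le_sum) auto
  also have "\<dots> \<le> (\<Sum>i\<in>UNIV. \<Sum>j\<in>UNIV. cmod (A q $ i $ j))"
    by (rule member_le_sum[of _ _ "\<lambda>i. \<Sum>j\<in>UNIV. cmod (A q $ i $ j)"]) (auto intro!: sum_nonneg)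
  also have "\<dots> \<le> amax A N" unfolding amax_def
    by (rule member_le_sum[of _ _ "\<lambda>q. \<Sum>i\<in>UNIV. \<Sum>j\<in>UNIV. cmod (A q $ i $ j)"])
       (use assms in \<open>auto intro!: sum_nonneg\<close>)
  finally show ?thesis .
qed

lemma amax_nonneg: "0 \<le> amax A N"
  unfolding amax_def by (intro sum_nonneg norm_ge_zero)

lemma cA_bound:
  fixes a :: "int \<Rightarrow> real"
  assumes pos: "\<forall>p. a p > 0" and symm: "\<forall>p. a p = a (- p)" and C: "\<forall>p. a p / a (p + 1) \<le> C"
    and t: "t \<in> {0..1}"
  shows "\<forall>q\<in>{-int N..int N}. \<forall>r i j. cmod (cA a t A q r i j) \<le> amax A N * (max C 1) ^ N"
proof (intro ballI allI)
  fix q r i j assume q: "q \<in> {-int N..int N}"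
  have "wt a t r q \<le> (max C 1) ^ N" using wt_bounds[OF pos symm C _ t t, of q N r] q by auto
  moreover have "0 < wt a t r q" by (rule wt_pos[OF pos])
  ultimately show "cmod (cA a t A q r i j) \<le> amax A N * (max C 1) ^ N"
    unfolding cA_def norm_mult using amax_ge[OF q, of A i j] amax_nonneg[of A N]
    by (intro mult_mono) auto
qed

lemma sig_diff_bound: "cmod (sig x - sig y) \<le> 2"
proof -
  have "cmod (sig x - sig y) \<le> cmod (sig x) + cmod (sig y)" by (rule norm_triangle_ineq4)
  also have "\<dots> = 2" by (simp add: sig_def)
  finally show ?thesis .
qed

lemma commJ_coeff:
  fixes c :: "int \<Rightarrow> int \<Rightarrow> 'n \<Rightarrow> 'n \<Rightarrow> complex"
  assumes cb: "\<forall>q\<in>{-int N..int N}. \<forall>r i j. cmod (c q r i j) \<le> B"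
  shows "\<forall>q\<in>{-int N..int N}. \<forall>r i j. cmod (c q r i j * (sig (r + q) - sig r)) \<le> 2 * B"
    and "\<forall>q\<in>{-int N..int N}. \<forall>r i j. r \<notin> {-int N..int N} \<longrightarrow> c q r i j * (sig (r + q) - sig r) = 0"
proof -
  show "\<forall>q\<in>{-int N..int N}. \<forall>r i j. cmod (c q r i j * (sig (r + q) - sig r)) \<le> 2 * B"
  proof (intro ballI allI)
    fix q r i j assume q: "q \<in> {-int N..int N}"
    have B0: "0 \<le> B" using cb[rule_format, OF q, of r i j] norm_ge_zero order_trans by blast
    have "cmod (c q r i j * (sig (r + q) - sig r)) = cmod (c q r i j) * cmod (sig (r + q) - sig r)"
      by (simp add: norm_mult)
    also have "\<dots> \<le> B * 2"
      using cb q sig_diff_bound B0 by (intro mult_mono) auto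
    finally show "cmod (c q r i j * (sig (r + q) - sig r)) \<le> 2 * B" by simp
  qed
  show "\<forall>q\<in>{-int N..int N}. \<forall>r i j. r \<notin> {-int N..int N} \<longrightarrow> c q r i j * (sig (r + q) - sig r) = 0"
    by (auto simp: sig_def)
qed

lemma Hmap_GLJ:
  fixes a :: "int \<Rightarrow> real" and A :: "int \<Rightarrow> complex^'n::finite^'n"
  assumes pos: "\<forall>p. a p > 0" and symm: "\<forall>p. a p = a (- p)" and C: "\<forall>p. a p / a (p + 1) \<le> C"
    and t: "t \<in> {0..1}" and A: "A \<in> LpolU"
  shows "Hmap a t A \<in> GLJ"
proof -
  have finA: "finite {q. A q \<noteq> 0}" using A by (simp add: LpolU_def)
  obtain N where s: "\<forall>q. A q \<noteq> 0 \<longrightarrow> q \<in> {-int N..int N}"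
    using finite_supp_bound[OF finA] by blast
  have s': "\<forall>q. Aadj A q \<noteq> 0 \<longrightarrow> q \<in> {-int N..int N}" by (rule Aadj_supp[OF s])
  define L where "L = (max C 1) ^ N"
  have L0: "0 \<le> L" by (simp add: L_def)
  have F: "Hmap a t A = band {-int N..int N} (cA a t A)" by (rule Hmap_N[OF s])
  have G: "Hmap a t (Aadj A) = band {-int N..int N} (cA a t (Aadj A))" by (rule Hmap_N[OF s'])
  have cbF: "\<forall>q\<in>{-int N..int N}. \<forall>r i j. cmod (cA a t A q r i j) \<le> amax A N * L"
    using cA_bound[OF pos symm C t] by (simp add: L_def)
  have cbG: "\<forall>q\<in>{-int N..int N}. \<forall>r i j. cmod (cA a t (Aadj A) q r i j) \<le> amax (Aadj A) N * L"
    using cA_bound[OF pos symm C t] by (simp add: L_def)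
  have B0: "0 \<le> amax A N * L" "0 \<le> amax (Aadj A) N * L" using L0 amax_nonneg[of A N] amax_nonneg[of "Aadj A" N] by simp_all
  have bF: "bounded_op (Hmap a t A)" unfolding F by (rule band_bounded_op[OF _ cbF B0(1)]) simp
  have bG: "bounded_op (Hmap a t (Aadj A))" unfolding G by (rule band_bounded_op[OF _ cbG B0(2)]) simp
  have unit: "unitary_mat (loop_eval A z)" if "cmod z = 1" for z using A that by (auto simp: LpolU_def)
  have prod1: "\<forall>z. cmod z = 1 \<longrightarrow> loop_eval (Aadj A) z ** loop_eval A z = mat 1"
    using unit loop_eval_adj[OF s] by (auto simp: unitary_mat_def)
  have prod2: "\<forall>z. cmod z = 1 \<longrightarrow> loop_eval A z ** loop_eval (Aadj A) z = mat 1"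
    using unit loop_eval_adj[OF s] by (auto simp: unitary_mat_def)
  have w0: "\<And>r. complex_of_real (wt a t r 0) = 1" using wt_q0[OF pos] by simp
  have wm: "\<And>r q q'. complex_of_real (wt a t r q) * complex_of_real (wt a t (r + q) q') = complex_of_real (wt a t r (q + q'))"
    using wt_mult[OF pos] by (metis of_real_mult)
  have GF: "Hmap a t (Aadj A) (Hmap a t A v) = v" for v
    unfolding F G cA_def
    by (rule band_comp_id[OF s conv_id[OF s' s prod1] w0 wm])
  have FG: "Hmap a t A (Hmap a t (Aadj A) v) = v" for v
    unfolding F G cA_def
    by (rule band_comp_id[OF s' conv_id[OF s s' prod2] w0 wm])
  have hs: "hilbert_schmidt (commJ (Hmap a t A))"
    unfolding F commJ_band
    using hs_band[OF _ commJ_coeff(2)[OF cbF] commJ_coeff(1)[OF cbF]] B0 by simp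
  show ?thesis unfolding GLJ_def using bF bG GF FG hs by blast
qed



lemma distJ_band_bound:
  fixes d :: "int \<Rightarrow> int \<Rightarrow> 'n::finite \<Rightarrow> 'n \<Rightarrow> complex"
  assumes F: "(\<lambda>v k. F v k - G v k) = band {-int N..int N} d"
    and db: "\<forall>q\<in>{-int N..int N}. \<forall>r i j. cmod (d q r i j) \<le> B" and B: "0 \<le> B"
  shows "0 \<le> distJ F G \<and> distJ F G \<le>
     real (card {-int N..int N}) * real CARD('n) * B * sqrt (real CARD('n))
     + sqrt (real (card ({-2 * int N..2 * int N} \<times> (UNIV :: 'n set))))
       * (real (card {-int N..int N}) * real CARD('n) * (2 * B) * sqrt (real CARD('n)))"
proof -
  have o: "opnorm (band {-int N..int N} d) \<le> real (card {-int N..int N}) * real CARD('n) * B * sqrt (real CARD('n))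
     \<and> 0 \<le> opnorm (band {-int N..int N} d)"
    by (rule opnorm_band[OF _ db B]) simp
  have h: "hilbert_schmidt (band {-int N..int N} (\<lambda>q r i j. d q r i j * (sig (r + q) - sig r))) \<and>
    hsnorm (band {-int N..int N} (\<lambda>q r i j. d q r i j * (sig (r + q) - sig r)))
     \<le> sqrt (real (card ({-2 * int N..2 * int N} \<times> (UNIV :: 'n set))))
       * (real (card {-int N..int N}) * real CARD('n) * (2 * B) * sqrt (real CARD('n)))
     \<and> 0 \<le> hsnorm (band {-int N..int N} (\<lambda>q r i j. d q r i j * (sig (r + q) - sig r)))"
    by (rule hs_band[OF _ commJ_coeff(2)[OF db] commJ_coeff(1)[OF db]]) (use B in auto)
  show ?thesis unfolding distJ_def F commJ_band using o h by linarith
qed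

lemma eventually_within_mem:
  assumes "\<And>x. x \<in> S \<Longrightarrow> P x"
  shows "eventually P (at a within S)"
  unfolding eventually_at_filter using assms by (auto intro: always_eventually)

lemma coord_tendsto:
  fixes A0 :: "int \<Rightarrow> complex^'n::finite^'n"
  shows "((\<lambda>x. snd x q $ i $ j) \<longlongrightarrow> A0 q $ i $ j) (at (t0, A0) within S)"
proof -
  have c: "isCont (\<lambda>f::int \<Rightarrow> complex^'n^'n. f q) A0"
  proof -
    have "continuous_on UNIV (\<lambda>f::int \<Rightarrow> complex^'n^'n. f q)" by simp
    then show ?thesis using continuous_on_eq_continuous_at[OF open_UNIV] by blast
  qed
  have "((\<lambda>x. snd x) \<longlongrightarrow> A0) (at (t0, A0) within S)"
    using tendsto_snd[OF tendsto_ident_at[of "(t0, A0)" S]] by simp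
  then have "((\<lambda>x. snd x q) \<longlongrightarrow> A0 q) (at (t0, A0) within S)"
    using isCont_tendsto_compose[OF c] by blast
  then show ?thesis by (intro tendsto_vec_nth)
qed

lemma fst_tendsto: "((\<lambda>x. fst x) \<longlongrightarrow> t0) (at (t0, A0) within S)"
  using tendsto_fst[OF tendsto_ident_at[of "(t0, A0)" S]] by simp



lemma sum3_ge:
  fixes f :: "int \<Rightarrow> 'n::finite \<Rightarrow> 'n \<Rightarrow> real"
  assumes nn: "\<And>q i j. 0 \<le> f q i j" and q: "q \<in> Q" and fin: "finite Q"
  shows "f q i j \<le> (\<Sum>q\<in>Q. \<Sum>i\<in>UNIV. \<Sum>j\<in>UNIV. f q i j)"
proof -
  have "f q i j \<le> (\<Sum>j\<in>UNIV. f q i j)" by (rule member_le_sum) (auto simp: nn)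
  also have "\<dots> \<le> (\<Sum>i\<in>UNIV. \<Sum>j\<in>UNIV. f q i j)"
    by (rule member_le_sum[of _ _ "\<lambda>i. \<Sum>j\<in>UNIV. f q i j"]) (auto intro!: sum_nonneg nn)
  also have "\<dots> \<le> (\<Sum>q\<in>Q. \<Sum>i\<in>UNIV. \<Sum>j\<in>UNIV. f q i j)"
    by (rule member_le_sum[of _ _ "\<lambda>q. \<Sum>i\<in>UNIV. \<Sum>j\<in>UNIV. f q i j"]) (use q fin in \<open>auto intro!: sum_nonneg nn\<close>)
  finally show ?thesis .
qed

lemma Hmap_cont:
  fixes a :: "int \<Rightarrow> real" and A0 :: "int \<Rightarrow> complex^'n::finite^'n"
  assumes pos: "\<forall>p. a p > 0" and symm: "\<forall>p. a p = a (- p)" and C: "\<forall>p. a p / a (p + 1) \<le> C"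
    and t0: "t0 \<in> {0..1}" and A0: "A0 \<in> LpolU_deg N"
  shows "((\<lambda>(t, A). distJ (Hmap a t A) (Hmap a t0 A0)) \<longlongrightarrow> 0)
           (at (t0, A0) within {0..1} \<times> LpolU_deg N)"
proof -
  let ?F = "at (t0, A0) within {0..1} \<times> LpolU_deg N"
  let ?Q = "{-int N..int N}"
  define L where "L = (max C 1) ^ N"
  have L1: "1 \<le> L" by (simp add: L_def)
  define g where "g t = L * (exp (\<bar>t - t0\<bar> * ln L) - 1)" for t
  have g0: "0 \<le> g t" for t
  proof -
    have "0 \<le> \<bar>t - t0\<bar> * ln L" using L1 by simp
    then show ?thesis using L1 by (simp add: g_def)
  qed
  define bnd where "bnd x = (\<Sum>q\<in>?Q. \<Sum>i\<in>UNIV. \<Sum>j\<in>UNIV.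
      cmod (snd x q $ i $ j - A0 q $ i $ j) * L + cmod (A0 q $ i $ j) * g (fst x))"
    for x :: "real \<times> (int \<Rightarrow> complex^'n^'n)"
  define h where "h x = real (card ?Q) * real CARD('n) * bnd x * sqrt (real CARD('n))
     + sqrt (real (card ({-2 * int N..2 * int N} \<times> (UNIV :: 'n set))))
       * (real (card ?Q) * real CARD('n) * (2 * bnd x) * sqrt (real CARD('n)))" for x
  have supp: "\<forall>q. A q \<noteq> 0 \<longrightarrow> q \<in> ?Q" if "A \<in> LpolU_deg N" for A :: "int \<Rightarrow> complex^'n^'n"
    using that by (auto simp: LpolU_deg_def)
  have bounds: "0 \<le> distJ (Hmap a t A) (Hmap a t0 A0) \<and> distJ (Hmap a t A) (Hmap a t0 A0) \<le> h (t, A)"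
    if x: "(t, A) \<in> {0..1} \<times> LpolU_deg N" for t A
  proof -
    have t: "t \<in> {0..1}" and A: "A \<in> LpolU_deg N" using x by auto
    have eq: "(\<lambda>v k. Hmap a t A v k - Hmap a t0 A0 v k)
        = band ?Q (\<lambda>q r i j. cA a t A q r i j - cA a t0 A0 q r i j)"
      unfolding Hmap_N[OF supp[OF A]] Hmap_N[OF supp[OF A0]] by (rule band_diff)
    have bn: "0 \<le> bnd (t, A)" unfolding bnd_def using L1 g0
      by (intro sum_nonneg) auto
    have db: "\<forall>q\<in>?Q. \<forall>r i j. cmod (cA a t A q r i j - cA a t0 A0 q r i j) \<le> bnd (t, A)"
    proof (intro ballI allI)
      fix q r i j assume q: "q \<in> ?Q"
      have wb: "wt a t r q \<le> L \<and> \<bar>wt a t r q - wt a t0 r q\<bar> \<le> g t"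
        using wt_bounds[OF pos symm C _ t t0, of q N r] q by (auto simp: L_def g_def)
      have wp: "0 < wt a t r q" by (rule wt_pos[OF pos])
      have nd: "cmod (complex_of_real (wt a t r q) - complex_of_real (wt a t0 r q)) = \<bar>wt a t r q - wt a t0 r q\<bar>"
        by (metis norm_of_real of_real_diff)
      have "cA a t A q r i j - cA a t0 A0 q r i j
          = (A q $ i $ j - A0 q $ i $ j) * complex_of_real (wt a t r q)
            + A0 q $ i $ j * complex_of_real (wt a t r q - wt a t0 r q)"
        unfolding cA_def by (simp add: algebra_simps)
      then have "cmod (cA a t A q r i j - cA a t0 A0 q r i j)
          \<le> cmod (A q $ i $ j - A0 q $ i $ j) * wt a t r q + cmod (A0 q $ i $ j) * \<bar>wt a t r q - wt a t0 r q\<bar>"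
        using norm_triangle_ineq[of "(A q $ i $ j - A0 q $ i $ j) * complex_of_real (wt a t r q)"
            "A0 q $ i $ j * complex_of_real (wt a t r q - wt a t0 r q)"] wp nd
        by (simp add: norm_mult)
      also have "\<dots> \<le> cmod (A q $ i $ j - A0 q $ i $ j) * L + cmod (A0 q $ i $ j) * g t"
        using wb by (intro add_mono mult_left_mono) auto
      also have "\<dots> \<le> bnd (t, A)"
        unfolding bnd_def
        using sum3_ge[of "\<lambda>q i j. cmod (A q $ i $ j - A0 q $ i $ j) * L + cmod (A0 q $ i $ j) * g t" q ?Q i j]
          q L1 g0 by simp
      finally show "cmod (cA a t A q r i j - cA a t0 A0 q r i j) \<le> bnd (t, A)" .
    qed
    show ?thesis using distJ_band_bound[OF eq db bn] by (simp add: h_def)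
  qed
  have ev1: "eventually (\<lambda>x. 0 \<le> (\<lambda>(t, A). distJ (Hmap a t A) (Hmap a t0 A0)) x) ?F"
    by (rule eventually_within_mem) (use bounds in auto)
  have ev2: "eventually (\<lambda>x. (\<lambda>(t, A). distJ (Hmap a t A) (Hmap a t0 A0)) x \<le> h x) ?F"
    by (rule eventually_within_mem) (use bounds in auto)
  have gt: "((\<lambda>x. g (fst x)) \<longlongrightarrow> g t0) ?F"
    unfolding g_def by (intro tendsto_intros fst_tendsto)
  have gt': "((\<lambda>x. g (fst x)) \<longlongrightarrow> g (fst (t0, A0))) ?F" using gt by simp
  have ct: "((\<lambda>x. snd x q) \<longlongrightarrow> snd (t0, A0) q) ?F" for q
  proof -
    have "((\<lambda>x. snd x) \<longlongrightarrow> A0) ?F"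
      using tendsto_snd[OF tendsto_ident_at[of "(t0, A0)" "{0..1} \<times> LpolU_deg N"]] by simp
    moreover have "isCont (\<lambda>f::int \<Rightarrow> complex^'n^'n. f q) A0"
    proof -
      have "continuous_on UNIV (\<lambda>f::int \<Rightarrow> complex^'n^'n. f q)" by simp
      then show ?thesis using continuous_on_eq_continuous_at[OF open_UNIV] by blast
    qed
    ultimately show ?thesis using isCont_tendsto_compose by fastforce
  qed
  have bt: "(bnd \<longlongrightarrow> bnd (t0, A0)) ?F"
    unfolding bnd_def[abs_def]
    by (intro tendsto_intros ct gt')
  have ht: "(h \<longlongrightarrow> h (t0, A0)) ?F"
    unfolding h_def[abs_def] by (intro tendsto_intros bt)
  have "g t0 = 0" by (simp add: g_def)
  then have "bnd (t0, A0) = 0" by (simp add: bnd_def)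
  then have h0: "h (t0, A0) = 0" by (simp add: h_def)
  show ?thesis
    by (rule tendsto_sandwich[OF ev1 ev2 tendsto_const]) (use ht h0 in simp)
qed


theorem mainTheorem20:
  fixes a :: "int \<Rightarrow> real"
  assumes pos: "\<forall>p. a p > 0"
    and rapid: "rapidly_decreasing a"
    and symm: "\<forall>p. a p = a (- p)"
    and ratio: "\<exists>C. \<forall>p. a p / a (p + 1) \<le> C"
  shows "\<exists>Hm :: real \<Rightarrow> (int \<Rightarrow> complex^'n::finite^'n) \<Rightarrow> 'n oper.
     (\<forall>t\<in>{0..1}. \<forall>A\<in>LpolU. Hm t A \<in> GLJ) \<and>
     (\<forall>A\<in>LpolU. \<forall>v\<in>l2. Hm 0 A v = transported a A v) \<and>
     (\<forall>A\<in>LpolU. \<forall>v\<in>l2. Hm 1 A v = loop_op A v) \<and>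
     (\<forall>N. \<forall>t0\<in>{0..1}. \<forall>A0\<in>LpolU_deg N.
        ((\<lambda>(t, A). distJ (Hm t A) (Hm t0 A0)) \<longlongrightarrow> 0)
          (at (t0, A0) within {0..1} \<times> LpolU_deg N))"
proof -
  obtain C where C: "\<forall>p. a p / a (p + 1) \<le> C" using ratio by blast
  show ?thesis
  proof (intro exI[of _ "Hmap a"] conjI ballI allI)
    fix t A assume "t \<in> {0..1::real}" "A \<in> (LpolU :: (int \<Rightarrow> complex^'n^'n) set)"
    then show "Hmap a t A \<in> GLJ" using Hmap_GLJ[OF pos symm C] by blast
  next
    fix A :: "int \<Rightarrow> complex^'n^'n" and v
    show "Hmap a 0 A v = transported a A v" by (rule Hmap_t0[OF pos])
  next
    fix A :: "int \<Rightarrow> complex^'n^'n" and v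
    show "Hmap a 1 A v = loop_op A v" by (rule Hmap_t1[OF pos])
  next
    fix N t0 and A0 :: "int \<Rightarrow> complex^'n^'n"
    assume "t0 \<in> {0..1::real}" "A0 \<in> LpolU_deg N"
    then show "((\<lambda>(t, A). distJ (Hmap a t A) (Hmap a t0 A0)) \<longlongrightarrow> 0)
          (at (t0, A0) within {0..1} \<times> LpolU_deg N)"
      by (rule Hmap_cont[OF pos symm C])
  qed
qed

end
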